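(* Let $H$ be an $N\times N$ Hermitian matrix with simple eigenvalues $\mu_1,\dots,\mu_N$ and associated unit eigenvectors $u_1,\dots,u_N$, let $v\in\mathbb{C}^N$ be a unit vector, and let $G_t := H + i t\, vv^*$ for $t\ge0$. Let $\lambda_1(t),\dots,\lambda_N(t)$ be the eigenvalues of $G_t$, indexed so that they form continuous trajectories with initial condition $\lambda_j(0)=\mu_j$. Then $$\lambda_j'(0) = i\,|v^*u_j|^2 \quad \text{for all } j,$$ and for every $t>0$ at which the eigenvalues $\lambda_1(t),\dots,\lambda_N(t)$ are distinct, $$\lambda_j'(t) = \frac{i\,\Im \lambda_j(t)}{t}\prod_{k\neq j}\left(1 + \frac{2i\,\Im\lambda_k(t)}{\lambda_j(t)-\lambda_k(t)}\right) \quad \text{for all } j.$$ *)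

theory Defs
  imports "HOL-Analysis.Analysis"
begin

definition cadjoint :: "complex^'m^'n \<Rightarrow> complex^'n^'m" where
  "cadjoint A = (\<chi> i j. cnj (A $ j $ i))"

definition hermitian :: "complex^'n^'n \<Rightarrow> bool" where
  "hermitian A \<longleftrightarrow> cadjoint A = A"

definition cinner :: "complex^'n \<Rightarrow> complex^'n \<Rightarrow> complex" where
  "cinner v u = (\<Sum>i\<in>UNIV. cnj (v $ i) * u $ i)"

definition outer :: "complex^'n \<Rightarrow> complex^'n^'n" where
  "outer v = (\<chi> a b. v $ a * cnj (v $ b))"

definition charpoly_at :: "complex^'n^'n \<Rightarrow> complex \<Rightarrow> complex" where
  "charpoly_at A x = det (mat x - A)"

end

theory Submission
  imports Defs
begin


lemma hvd_quot:
  fixes f :: "real \<Rightarrow> complex"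
  assumes "((\<lambda>y. (f y - f x) / of_real (y - x)) \<longlongrightarrow> D) (at x within S)"
  shows "(f has_vector_derivative D) (at x within S)"
proof -
  have 0: "((\<lambda>y. (f y - f x) / of_real (y - x) - D) \<longlongrightarrow> 0) (at x within S)"
    using tendsto_diff[OF assms tendsto_const[of D]] by simp
  have "((\<lambda>y. (1 / norm (y - x)) *\<^sub>R (f y - (f x + (y - x) *\<^sub>R D))) \<longlongrightarrow> 0) (at x within S)"
  proof (rule tendsto_norm_zero_cancel)
    have "((\<lambda>y. norm ((f y - f x) / of_real (y - x) - D)) \<longlongrightarrow> 0) (at x within S)"
      using tendsto_norm_zero[OF 0] .
    moreover have "\<forall>\<^sub>F y in at x within S. norm ((f y - f x) / of_real (y - x) - D) = norm ((1 / norm (y - x)) *\<^sub>R (f y - (f x + (y - x) *\<^sub>R D)))"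
    proof (rule eventually_at_filter[THEN iffD2], intro always_eventually allI impI)
      fix y assume "y \<noteq> x"
      then have nz: "complex_of_real (y - x) \<noteq> 0" by simp
      have "(f y - f x) / of_real (y - x) - D = (f y - (f x + (y - x) *\<^sub>R D)) / of_real (y - x)"
        using nz by (simp add: field_simps scaleR_conv_of_real)
      then show "norm ((f y - f x) / of_real (y - x) - D) = norm ((1 / norm (y - x)) *\<^sub>R (f y - (f x + (y - x) *\<^sub>R D)))"
        using norm_of_real[of "y - x"] by (simp add: norm_divide del: of_real_diff)
    qed
    ultimately show "((\<lambda>y. norm ((1 / norm (y - x)) *\<^sub>R (f y - (f x + (y - x) *\<^sub>R D)))) \<longlongrightarrow> 0) (at x within S)"
      by (rule Lim_transform_eventually)
  qed
  then show ?thesis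
    unfolding has_vector_derivative_def has_derivative_within
    by (simp add: bounded_linear_scaleR_left)
qed

lemma GL:
  fixes lam :: "real \<Rightarrow> complex" and g Dd :: "complex \<Rightarrow> complex"
  assumes lc: "continuous (at t0 within S) lam" and gc: "isCont g (lam t0)"
    and Dc: "isCont Dd (lam t0)" and Dnz: "Dd (lam t0) \<noteq> 0"
    and eq: "\<And>s. s \<in> S \<Longrightarrow> (lam s - lam t0) * Dd (lam s) = - (of_real (s - t0) * g (lam s))"
  shows "(lam has_vector_derivative (- g (lam t0) / Dd (lam t0))) (at t0 within S)"
proof (rule hvd_quot)
  have l: "(lam \<longlongrightarrow> lam t0) (at t0 within S)" using lc by (simp add: continuous_within)
  have D: "((\<lambda>s. Dd (lam s)) \<longlongrightarrow> Dd (lam t0)) (at t0 within S)"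
    by (rule isCont_tendsto_compose[OF Dc l])
  have G: "((\<lambda>s. g (lam s)) \<longlongrightarrow> g (lam t0)) (at t0 within S)"
    by (rule isCont_tendsto_compose[OF gc l])
  have ev: "\<forall>\<^sub>F s in at t0 within S. Dd (lam s) \<noteq> 0"
    using tendsto_imp_eventually_ne[OF D Dnz] .
  have q: "((\<lambda>s. - g (lam s) / Dd (lam s)) \<longlongrightarrow> - g (lam t0) / Dd (lam t0)) (at t0 within S)"
    by (intro tendsto_intros G D Dnz)
  have "\<forall>\<^sub>F s in at t0 within S. - g (lam s) / Dd (lam s) = (lam s - lam t0) / of_real (s - t0)"
  proof -
    have "\<forall>\<^sub>F s in at t0 within S. s \<in> S \<and> s \<noteq> t0"
      by (simp add: eventually_at_filter)
    then show ?thesis using ev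
    proof eventually_elim
      case (elim s)
      then have "of_real (s - t0) \<noteq> (0::complex)" by simp
      with elim eq[of s] show ?case by (simp add: field_simps)
    qed
  qed
  then show "((\<lambda>s. (lam s - lam t0) / of_real (s - t0)) \<longlongrightarrow> - g (lam t0) / Dd (lam t0)) (at t0 within S)"
    by (rule Lim_transform_eventually[OF q])
qed



lemma RO:
  fixes A :: "'a::comm_ring_1^'n^'n" and z :: "'a^'n"
  shows "det (\<chi> i. if i \<in> T then A$i + c i *s z else A$i) =
         det A + (\<Sum>m\<in>T. c m * det (\<chi> i. if i = m then z else A$i))"
proof (induction T arbitrary: A rule: infinite_finite_induct)
  case (infinite T) then show ?case by simp
next
  case empty then show ?case by (simp add: vec_lambda_eta)
next
  case (insert n T)
  have split: "det (\<chi> i. if i \<in> insert n T then A$i + c i *s z else A$i)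
     = det (\<chi> i. if i = n then A$n else (if i \<in> T then A$i + c i *s z else A$i))
       + det (\<chi> i. if i = n then c n *s z else (if i \<in> T then A$i + c i *s z else A$i))"
  proof -
    have "(\<chi> i. if i \<in> insert n T then A$i + c i *s z else A$i)
       = (\<chi> i. if i = n then A$n + c n *s z else (if i \<in> T then A$i + c i *s z else A$i))"
      by (rule Cart_lambda_cong) auto
    then show ?thesis using det_row_add[of n "\<lambda>_. A$n" "\<lambda>_. c n *s z"] by simp
  qed
  have 1: "(\<chi> i. if i = n then A$n else (if i \<in> T then A$i + c i *s z else A$i))
        = (\<chi> i. if i \<in> T then A$i + c i *s z else A$i)"
    by (rule Cart_lambda_cong) (use insert in auto)
  define A' where "A' = (\<chi> i. if i = n then z else A$i)"
  have 2: "det (\<chi> i. if i = n then c n *s z else (if i \<in> T then A$i + c i *s z else A$i))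
        = c n * det (\<chi> i. if i \<in> T then A'$i + c i *s z else A'$i)"
  proof -
    have "det (\<chi> i. if i = n then c n *s z else (if i \<in> T then A$i + c i *s z else A$i))
       = c n * det (\<chi> i. if i = n then z else (if i \<in> T then A$i + c i *s z else A$i))"
      using det_row_mul[of n "c n" "\<lambda>_. z"] by simp
    also have "(\<chi> i. if i = n then z else (if i \<in> T then A$i + c i *s z else A$i))
        = (\<chi> i. if i \<in> T then A'$i + c i *s z else A'$i)"
      unfolding A'_def by (rule Cart_lambda_cong) (use insert in auto)
    finally show ?thesis .
  qed
  have 3: "det (\<chi> i. if i \<in> T then A'$i + c i *s z else A'$i) = det A'"
  proof -
    have "det (\<chi> i. if i = m then z else A'$i) = 0" if "m \<in> T" for m
    proof (rule det_identical_rows[of m n])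
      show "m \<noteq> n" using that insert by auto
      show "row m (\<chi> i. if i = m then z else A'$i) = row n (\<chi> i. if i = m then z else A'$i)"
        using \<open>m \<noteq> n\<close> by (simp add: row_def A'_def vec_lambda_eta)
    qed
    then show ?thesis using insert.IH[of A'] by simp
  qed
  show ?case
    unfolding split 1 2 3 insert.IH[of A] using insert by (simp add: A'_def algebra_simps)
qed

lemma DR:
  fixes d :: "'n::finite \<Rightarrow> 'a::{idom,ring_char_0}" and z :: "'a^'n"
  shows "det (\<chi> i. if i = m then z else (\<chi> j. if i = j then d i else 0)) = z$m * (\<Prod>k\<in>UNIV-{m}. d k)"
proof -
  have zs: "z = (\<Sum>b\<in>UNIV. (\<chi> j. if b = j then z$b else 0))"
    by (simp add: vec_eq_iff sum_component)
  have "det (\<chi> i. if i = m then z else (\<chi> j. if i = j then d i else 0))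
     = (\<Sum>b\<in>UNIV. det (\<chi> i. if i = m then (\<chi> j. if b = j then z$b else 0) else (\<chi> j. if i = j then d i else 0)))"
    apply (subst zs)
    by (rule det_linear_row_sum) simp
  also have "\<dots> = det (\<chi> i. if i = m then (\<chi> j. if m = j then z$m else 0) else (\<chi> j. if i = j then d i else 0))"
  proof -
    have "det (\<chi> i. if i = m then (\<chi> j. if b = j then z$b else 0) else (\<chi> j. if i = j then d i else 0)) = 0"
      if "b \<noteq> m" for b
      by (rule det_zero_column(1)[of m]) (use that in \<open>auto simp: column_def vec_eq_iff\<close>)
    then show ?thesis by (subst sum.remove[of _ m]) auto
  qed
  also have "\<dots> = (\<Prod>i\<in>UNIV. if i = m then z$m else d i)"
    by (subst det_diagonal) (auto intro!: prod.cong)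
  also have "\<dots> = z$m * (\<Prod>k\<in>UNIV-{m}. d k)"
    by (subst prod.remove[of _ m]) (auto intro!: prod.cong)
  finally show ?thesis .
qed



lemma cinner_diff_right: "cinner a (b - c) = cinner a b - cinner a c"
  by (simp add: cinner_def algebra_simps sum_subtractf)
lemma cinner_add_right: "cinner a (b + c) = cinner a b + cinner a c"
  by (simp add: cinner_def algebra_simps sum.distrib)
lemma cinner_scale_right: "cinner a (s *s b) = s * cinner a b"
  by (simp add: cinner_def algebra_simps sum_distrib_left)
lemma cinner_scale_left: "cinner (s *s a) b = cnj s * cinner a b"
  by (simp add: cinner_def algebra_simps sum_distrib_left)
lemma cinner_cnj: "cinner a b = cnj (cinner b a)"
  by (simp add: cinner_def mult.commute)

lemma cinner_herm:
  assumes "hermitian H"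
  shows "cinner y (H *v z) = cinner (H *v y) z"
proof -
  have h: "cnj (H$b$a) = H$a$b" for a b
    using assms unfolding hermitian_def cadjoint_def by (metis vec_lambda_beta)
  have "cinner y (H *v z) = (\<Sum>a\<in>UNIV. \<Sum>b\<in>UNIV. cnj (y$a) * H$a$b * z$b)"
    by (simp add: cinner_def matrix_vector_mult_def sum_distrib_left mult.assoc)
  also have "\<dots> = (\<Sum>b\<in>UNIV. \<Sum>a\<in>UNIV. cnj (y$a) * H$a$b * z$b)"
    by (rule sum.swap)
  also have "\<dots> = cinner (H *v y) z"
    by (simp add: cinner_def matrix_vector_mult_def sum_distrib_right sum_distrib_left h mult.commute mult.left_commute)
  finally show ?thesis .
qed

lemma cinner_self_norm: "cinner y y = complex_of_real ((norm y)^2)"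
proof -
  have "(norm y)^2 = (\<Sum>i\<in>UNIV. (norm (y$i))^2)"
    by (simp add: norm_vec_def L2_set_def sum_nonneg)
  have "cinner y y = (\<Sum>i\<in>UNIV. complex_of_real ((norm (y$i))^2))"
    by (simp only: cinner_def complex_norm_square) (simp add: mult.commute)
  also have "\<dots> = complex_of_real (\<Sum>i\<in>UNIV. (norm (y$i))^2)" by simp
  finally show ?thesis using \<open>(norm y)^2 = _\<close> by simp
qed

lemma ortho:
  fixes H :: "complex^'n^'n" and \<mu> :: "'n \<Rightarrow> real" and u :: "'n \<Rightarrow> complex^'n"
  assumes herm: "hermitian H" and simple: "inj \<mu>"
    and eigvec: "\<And>j. H *v u j = complex_of_real (\<mu> j) *s u j"
    and unit_u: "\<And>j. norm (u j) = 1"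
  shows "cinner (u k) (u l) = (if k = l then 1 else 0)"
proof (cases "k = l")
  case True then show ?thesis using unit_u by (simp add: cinner_self_norm)
next
  case False
  have "of_real (\<mu> l) * cinner (u k) (u l) = cinner (u k) (H *v u l)"
    by (simp add: eigvec cinner_scale_right)
  also have "\<dots> = cinner (H *v u k) (u l)" by (rule cinner_herm[OF herm])
  also have "\<dots> = of_real (\<mu> k) * cinner (u k) (u l)"
    by (simp add: eigvec cinner_scale_left)
  finally have "(of_real (\<mu> l) - of_real (\<mu> k)) * cinner (u k) (u l) = 0"
    by (simp add: algebra_simps)
  moreover have "\<mu> l \<noteq> \<mu> k" using False simple by (metis injD)
  ultimately show ?thesis using False by simp
qed

lemma matmv: "mat x *v y = x *s y"
proof -
  have "(\<Sum>j\<in>UNIV. (if i = j then x else 0) * y$j) = x * y$i" for i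
    by (simp add: if_distrib[of "\<lambda>z. z * _"] cong: if_cong)
  then show ?thesis by (simp add: vec_eq_iff matrix_vector_mult_def mat_def)
qed

lemma outmv: "(\<chi> a b. c * outer v $ a $ b) *v y = (c * cinner v y) *s v"
  by (simp add: vec_eq_iff matrix_vector_mult_def outer_def cinner_def sum_distrib_left mult_ac)

lemma Mv:
  "(mat x - (H + (\<chi> a b. \<i> * complex_of_real t * outer v $ a $ b))) *v y
     = x *s y - H *v y - (\<i> * complex_of_real t * cinner v y) *s v"
  by (simp only: matrix_vector_mult_diff_rdistrib matrix_vector_mult_add_rdistrib matmv outmv) simp



lemma Fform:
  fixes H :: "complex^'n^'n" and \<mu> :: "'n \<Rightarrow> real" and u :: "'n \<Rightarrow> complex^'n"
    and v :: "complex^'n"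
  assumes herm: "hermitian H" and simple: "inj \<mu>"
    and eigvec: "\<And>j. H *v u j = complex_of_real (\<mu> j) *s u j"
    and unit_u: "\<And>j. norm (u j) = 1"
  shows "charpoly_at (H + (\<chi> a b. \<i> * complex_of_real t * outer v $ a $ b)) x
    = (\<Prod>k\<in>UNIV. x - complex_of_real (\<mu> k))
      - \<i> * complex_of_real t * (\<Sum>m\<in>UNIV. complex_of_real ((cmod (cinner v (u m)))\<^sup>2)
            * (\<Prod>k\<in>UNIV-{m}. x - complex_of_real (\<mu> k)))"
proof -
  note orth = ortho[OF herm simple eigvec unit_u]
  define U :: "complex^'n^'n" where "U = (\<chi> a k. u k $ a)"
  define Uh :: "complex^'n^'n" where "Uh = (\<chi> k a. cnj (u k $ a))"
  define M where "M = mat x - (H + (\<chi> a b. \<i> * complex_of_real t * outer v $ a $ b))"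
  define c where "c = \<i> * complex_of_real t"
  define w where "w k = cinner (u k) v" for k
  define z :: "complex^'n" where "z = (\<chi> l. cnj (w l))"
  define d where "d k = x - complex_of_real (\<mu> k)" for k
  define Dm :: "complex^'n^'n" where "Dm = (\<chi> i j. if i = j then d i else 0)"
  have "Uh ** U = mat 1"
    using orth by (simp add: vec_eq_iff matrix_matrix_mult_def mat_def U_def Uh_def cinner_def)
  then have dU: "det Uh * det U = 1" by (metis det_I det_mul)
  have Nent: "(Uh ** (M ** U))$k$l = cinner (u k) (M *v u l)" for k l
    by (simp add: matrix_matrix_mult_def matrix_vector_mult_def cinner_def U_def Uh_def sum_distrib_left mult.assoc)
  have N: "Uh ** (M ** U) = (\<chi> i. if i \<in> UNIV then Dm$i + (- c * w i) *s z else Dm$i)"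
  proof -
    have "cinner (u k) (M *v u l) = (if k = l then d k else 0) + (- c * w k) * cnj (w l)" for k l
    proof -
      have "cinner (u k) (M *v u l) = x * cinner (u k) (u l) - of_real (\<mu> l) * cinner (u k) (u l)
          - c * cinner v (u l) * w k"
        unfolding M_def Mv eigvec c_def w_def
        by (simp add: cinner_diff_right cinner_scale_right)
      also have "cinner v (u l) = cnj (w l)" unfolding w_def by (rule cinner_cnj)
      finally show ?thesis using orth[of k l] by (simp add: d_def)
    qed
    then show ?thesis by (simp add: vec_eq_iff Nent Dm_def z_def)
  qed
  have detM: "det M = det (Uh ** (M ** U))"
    using dU by (simp add: det_mul algebra_simps)
  also have "\<dots> = det Dm + (\<Sum>m\<in>UNIV. (- c * w m) * det (\<chi> i. if i = m then z else Dm$i))"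
    unfolding N by (rule RO)
  also have "det Dm = (\<Prod>k\<in>UNIV. d k)"
    unfolding Dm_def by (subst det_diagonal) auto
  also have "(\<lambda>m. det (\<chi> i. if i = m then z else Dm$i)) = (\<lambda>m. cnj (w m) * (\<Prod>k\<in>UNIV-{m}. d k))"
  proof
    fix m
    have "(\<chi> i. if i = m then z else Dm$i) = (\<chi> i. if i = m then z else (\<chi> j. if i = j then d i else 0))"
      by (rule Cart_lambda_cong) (simp add: Dm_def)
    then show "det (\<chi> i. if i = m then z else Dm$i) = cnj (w m) * (\<Prod>k\<in>UNIV-{m}. d k)"
      using DR[of m z d] by (simp add: z_def)
  qed
  finally have "det M = (\<Prod>k\<in>UNIV. d k) + (\<Sum>m\<in>UNIV. (- c * w m) * (cnj (w m) * (\<Prod>k\<in>UNIV-{m}. d k)))" .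
  also have "\<dots> = (\<Prod>k\<in>UNIV. d k) - c * (\<Sum>m\<in>UNIV. complex_of_real ((cmod (cinner v (u m)))\<^sup>2) * (\<Prod>k\<in>UNIV-{m}. d k))"
  proof -
    have "w m * cnj (w m) = complex_of_real ((cmod (cinner v (u m)))\<^sup>2)" for m
      unfolding w_def complex_norm_square[symmetric] by (subst cinner_cnj) simp
    then have eqm: "(- c * w m) * (cnj (w m) * (\<Prod>k\<in>UNIV-{m}. d k))
       = - (c * (complex_of_real ((cmod (cinner v (u m)))\<^sup>2) * (\<Prod>k\<in>UNIV-{m}. d k)))" for m
      by (metis (no_types, lifting) mult.assoc mult_minus_left)
    show ?thesis
      by (simp only: eqm sum_negf sum_distrib_left) simp
  qed
  finally show ?thesis unfolding charpoly_at_def M_def[symmetric] d_def c_def .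
qed



theorem theorem1p5:
  fixes H :: "complex^'n^'n" and \<mu> :: "'n \<Rightarrow> real" and u :: "'n \<Rightarrow> complex^'n"
    and v :: "complex^'n" and lam :: "'n \<Rightarrow> real \<Rightarrow> complex"
    and G :: "real \<Rightarrow> complex^'n^'n"
  assumes herm: "hermitian H"
    and simple: "inj \<mu>"
    and spec_H: "\<And>x. charpoly_at H x = (\<Prod>j\<in>UNIV. x - complex_of_real (\<mu> j))"
    and eigvec: "\<And>j. H *v u j = complex_of_real (\<mu> j) *s u j"
    and unit_u: "\<And>j. norm (u j) = 1"
    and unit_v: "norm v = 1"
    and G_def: "\<And>t. G t = H + (\<chi> a b. \<i> * complex_of_real t * outer v $ a $ b)"
    and cont: "\<And>j. continuous_on {0..} (lam j)"
    and spec_G: "\<And>t x. t \<ge> 0 \<Longrightarrow> charpoly_at (G t) x = (\<Prod>j\<in>UNIV. x - lam j t)"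
    and init: "\<And>j. lam j 0 = complex_of_real (\<mu> j)"
  shows "(\<forall>j. (lam j has_vector_derivative
              (\<i> * complex_of_real ((cmod (cinner v (u j)))\<^sup>2))) (at 0 within {0..}))
       \<and> (\<forall>t>0. (\<forall>j k. j \<noteq> k \<longrightarrow> lam j t \<noteq> lam k t) \<longrightarrow>
           (\<forall>j. (lam j has_vector_derivative
              (\<i> * complex_of_real (Im (lam j t) / t) *
               (\<Prod>k\<in>UNIV - {j}. 1 + 2 * \<i> * complex_of_real (Im (lam k t)) / (lam j t - lam k t))))
              (at t)))"
proof -
  define W where "W m = complex_of_real ((cmod (cinner v (u m)))\<^sup>2)" for m
  define P where "P y = (\<Prod>k\<in>UNIV. y - complex_of_real (\<mu> k))" for y
  define Q where "Q y = - \<i> * (\<Sum>m\<in>UNIV. W m * (\<Prod>k\<in>UNIV-{m}. y - complex_of_real (\<mu> k)))" for y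
  have FF: "charpoly_at (G t) y = P y + of_real t * Q y" for t y
    unfolding G_def Fform[OF herm simple eigvec unit_u] P_def Q_def W_def by (simp add: algebra_simps)
  have root: "P (lam j s) + of_real s * Q (lam j s) = 0" if "s \<ge> 0" for j s
    using spec_G[OF that, of "lam j s"] unfolding FF by (auto simp: prod_zero_iff)
  have Qc: "isCont Q y" for y unfolding Q_def by (intro continuous_intros)
  have lc: "continuous (at s within {0..}) (lam j)" if "s \<ge> 0" for s j
    using cont[of j] that by (simp add: continuous_on_eq_continuous_within)
  have Pfac: "P y = (y - of_real (\<mu> j)) * (\<Prod>k\<in>UNIV-{j}. y - complex_of_real (\<mu> k))" for y j
    unfolding P_def by (subst prod.remove[of _ j]) auto
  have part1: "(lam j has_vector_derivative (\<i> * W j)) (at 0 within {0..})" for j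
  proof -
    define Dd where "Dd y = (\<Prod>k\<in>UNIV-{j}. y - complex_of_real (\<mu> k))" for y
    have Dnz: "Dd (lam j 0) \<noteq> 0"
      unfolding Dd_def init using simple by (auto simp: prod_zero_iff inj_eq)
    have Dc: "isCont Dd y" for y unfolding Dd_def by (intro continuous_intros)
    have "(lam j has_vector_derivative (- Q (lam j 0) / Dd (lam j 0))) (at 0 within {0..})"
    proof (rule GL[OF lc Qc Dc Dnz])
      fix s :: real assume "s \<in> {0..}"
      then have "P (lam j s) + of_real s * Q (lam j s) = 0" using root by auto
      then show "(lam j s - lam j 0) * Dd (lam j s) = - (of_real (s - 0) * Q (lam j s))"
        unfolding init Pfac[of _ j] Dd_def by (simp add: algebra_simps)
    qed simp
    moreover have "Q (lam j 0) = - \<i> * W j * Dd (lam j 0)"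
    proof -
      have "(\<Sum>m\<in>UNIV. W m * (\<Prod>k\<in>UNIV-{m}. of_real (\<mu> j) - complex_of_real (\<mu> k)))
          = W j * (\<Prod>k\<in>UNIV-{j}. of_real (\<mu> j) - complex_of_real (\<mu> k))"
        apply (subst sum.remove[of _ j])
          apply (auto simp: prod_zero_iff intro!: sum.neutral)
        by (metis Diff_iff UNIV_I singletonD)
      then show ?thesis unfolding Q_def Dd_def init by simp
    qed
    ultimately show ?thesis using Dnz by simp
  qed
  have part2: "(lam j has_vector_derivative
              (\<i> * complex_of_real (Im (lam j t) / t) *
               (\<Prod>k\<in>UNIV - {j}. 1 + 2 * \<i> * complex_of_real (Im (lam k t)) / (lam j t - lam k t))))
              (at t)"
    if tpos: "t > 0" and dist: "\<forall>j k. j \<noteq> k \<longrightarrow> lam j t \<noteq> lam k t" for t j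
  proof -
    define L where "L k = lam k t" for k
    define Dd where "Dd y = (\<Prod>k\<in>UNIV-{j}. y - L k)" for y
    have PQt: "P y + of_real t * Q y = (y - L j) * Dd y" for y
      using spec_G[of t y] tpos unfolding FF Dd_def L_def by (simp add: prod.remove[of _ j])
    have Dnz: "Dd (lam j t) \<noteq> 0"
      unfolding Dd_def L_def using dist by (auto simp: prod_zero_iff)
    have Dc: "isCont Dd y" for y unfolding Dd_def by (intro continuous_intros)
    have "(lam j has_vector_derivative (- Q (lam j t) / Dd (lam j t))) (at t within {0..})"
    proof (rule GL[OF lc Qc Dc Dnz])
      show "t \<ge> 0" using tpos by simp
      fix s :: real assume "s \<in> {0..}"
      then have "P (lam j s) + of_real s * Q (lam j s) = 0" using root by auto
      moreover have "P (lam j s) + of_real t * Q (lam j s) = (lam j s - L j) * Dd (lam j s)"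
        by (rule PQt)
      ultimately have "- (of_real s * Q (lam j s)) + of_real t * Q (lam j s) = (lam j s - L j) * Dd (lam j s)"
        by (metis add.commute add_eq_0_iff)
      then show "(lam j s - lam j t) * Dd (lam j s) = - (of_real (s - t) * Q (lam j s))"
        unfolding L_def by (simp add: algebra_simps)
    qed
    then have "(lam j has_vector_derivative (- Q (lam j t) / Dd (lam j t))) (at t within {0<..})"
      by (rule has_vector_derivative_within_subset) auto
    then have der: "(lam j has_vector_derivative (- Q (L j) / Dd (L j))) (at t)"
      using at_within_open[of t "{0<..}"] tpos by (simp add: L_def)
    have Pc: "cnj (P (cnj y)) = P y" for y unfolding P_def by simp
    have Qc': "cnj (Q (cnj y)) = - Q y" for y unfolding Q_def W_def by simp
    have PQm: "P y - of_real t * Q y = (\<Prod>k\<in>UNIV. y - cnj (L k))" for y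
    proof -
      have "P y - of_real t * Q y = cnj (P (cnj y) + of_real t * Q (cnj y))"
        using Pc[of y] Qc'[of y] by simp
      also have "\<dots> = cnj (\<Prod>k\<in>UNIV. cnj y - L k)"
        using spec_G[of t "cnj y"] tpos unfolding FF L_def by simp
      finally show ?thesis by simp
    qed
    have r0: "P (L j) + of_real t * Q (L j) = 0" using PQt[of "L j"] by simp
    have "- 2 * of_real t * Q (L j) = (\<Prod>k\<in>UNIV. L j - cnj (L k))"
      using PQm[of "L j"] r0 by (simp add: algebra_simps add_eq_0_iff)
    also have "\<dots> = (L j - cnj (L j)) * (\<Prod>k\<in>UNIV-{j}. L j - cnj (L k))"
      by (subst prod.remove[of _ j]) auto
    also have "(\<Prod>k\<in>UNIV-{j}. L j - cnj (L k))
        = Dd (L j) * (\<Prod>k\<in>UNIV - {j}. 1 + 2 * \<i> * complex_of_real (Im (L k)) / (L j - L k))"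
    proof -
      have "L j - cnj (L k) = (L j - L k) * (1 + 2 * \<i> * complex_of_real (Im (L k)) / (L j - L k))"
        if "k \<in> UNIV - {j}" for k
      proof -
        have "L j - L k \<noteq> 0" using dist that unfolding L_def by auto
        moreover have "L k - cnj (L k) = complex_of_real (2 * Im (L k)) * \<i>" by (rule complex_diff_cnj)
        ultimately have "(L j - L k) * (1 + 2 * \<i> * complex_of_real (Im (L k)) / (L j - L k))
            = (L j - L k) + (L k - cnj (L k))"
          by (simp add: distrib_left mult.commute)
        then show ?thesis by simp
      qed
      then have "(\<Prod>k\<in>UNIV-{j}. L j - cnj (L k)) = (\<Prod>k\<in>UNIV-{j}. (L j - L k) * (1 + 2 * \<i> * complex_of_real (Im (L k)) / (L j - L k)))"
        by (rule prod.cong[OF refl])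
      then show ?thesis unfolding Dd_def by (simp only: prod.distrib)
    qed
    finally have eqQ: "- 2 * of_real t * Q (L j) = (L j - cnj (L j)) *
        (Dd (L j) * (\<Prod>k\<in>UNIV - {j}. 1 + 2 * \<i> * complex_of_real (Im (L k)) / (L j - L k)))" .
    have DnzL: "Dd (L j) \<noteq> 0" using Dnz by (simp add: L_def)
    have "- Q (L j) / Dd (L j) = \<i> * complex_of_real (Im (L j) / t) *
               (\<Prod>k\<in>UNIV - {j}. 1 + 2 * \<i> * complex_of_real (Im (L k)) / (L j - L k))"
    proof -
      have tnz: "complex_of_real t \<noteq> 0" using tpos by simp
      have "- Q (L j) = (L j - cnj (L j)) *
        (Dd (L j) * (\<Prod>k\<in>UNIV - {j}. 1 + 2 * \<i> * complex_of_real (Im (L k)) / (L j - L k))) / (2 * of_real t)"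
        using eqQ tnz by (simp add: field_simps)
      then show ?thesis using DnzL tnz unfolding complex_diff_cnj by (simp add: field_simps)
    qed
    with der show ?thesis by (simp add: L_def)
  qed
  show ?thesis using part1 part2 unfolding W_def by blast
qed

end
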